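(* Let $f, g:\mathbb{D}\to\mathbb{C}$ be analytic functions on the open unit disc $\mathbb{D}$, and let $L_1, L_2$ be two line segments in $\mathbb{D}$ intersecting at an angle $\theta\in(0,\pi/2)\setminus\pi\mathbb{Q}$, such that $|f(z)|=|g(z)|$ for all $z\in L_1\cup L_2$. Then $f=\beta g$ for some constant $\beta\in\mathbb{T}$.
   Context: $\mathbb{D}=\{z\in\mathbb{C}:|z|<1\}$ and $\mathbb{T}=\{z\in\mathbb{C}:|z|=1\}$. $\pi\mathbb{Q}$ denotes the set of rational multiples of $\pi$. *)

theory Defs
  imports "HOL-Complex_Analysis.Complex_Analysis"
begin

definition line_angle :: "complex \<Rightarrow> complex \<Rightarrow> real" where
  "line_angle d1 d2 = arccos (\<bar>Re (d1 * cnj d2)\<bar> / (cmod d1 * cmod d2))"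

end

theory Submission imports Defs begin


lemma angle_part:
  fixes d1 d2 :: complex and \<theta> :: real and k :: nat
  assumes d1: "d1 \<noteq> 0" and d2: "d2 \<noteq> 0" and th: "\<theta> = line_angle d1 d2"
    and pos: "0 < \<theta>" and lt: "\<theta> < pi / 2" and irr: "\<not> (\<exists>q \<in> \<rat>. \<theta> = pi * q)"
    and k: "k > 0"
  shows "((d2 / cnj d2) * cnj (d1 / cnj d1)) ^ k \<noteq> 1"
proof
  assume eq: "((d2 / cnj d2) * cnj (d1 / cnj d1)) ^ k = 1"
  define w where "w = d1 * cnj d2"
  define x where "x = Re w"
  define y where "y = Im w"
  define N where "N = cmod d1 * cmod d2"
  have Npos: "N > 0" using d1 d2 by (simp add: N_def)
  have N2: "N^2 = x^2 + y^2"
  proof -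
    have "N = cmod w" by (simp add: N_def w_def norm_mult)
    then show ?thesis by (simp add: cmod_power2 x_def y_def)
  qed
  have lam: "(d2 / cnj d2) * cnj (d1 / cnj d1) = cnj w / w"
    using d1 d2 by (simp add: w_def field_simps)
  have ReL: "Re (cnj w / w) = (x^2 - y^2) / N^2" and ImL: "Im (cnj w / w) = - 2 * x * y / N^2"
    using N2 by (simp_all add: x_def y_def Re_divide Im_divide power2_eq_square)
  have absx: "\<bar>x\<bar> / N \<le> 1"
  proof -
    have "x^2 \<le> N^2" using N2 by simp
    then have "\<bar>x\<bar> \<le> N" using Npos by (metis abs_le_square_iff abs_of_pos)
    then show ?thesis using Npos by simp
  qed
  have cth: "cos \<theta> = \<bar>x\<bar> / N"
  proof -
    have "\<theta> = arccos (\<bar>x\<bar> / N)" using th by (simp add: line_angle_def x_def w_def N_def)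
    moreover have "0 \<le> \<bar>x\<bar> / N" using Npos by simp
    ultimately show ?thesis using absx cos_arccos[of "\<bar>x\<bar> / N"] by simp
  qed
  have sth: "sin \<theta> = \<bar>y\<bar> / N"
  proof -
    have "sin \<theta> \<ge> 0" using pos lt by (intro sin_ge_zero) auto
    moreover have "(sin \<theta>)^2 = (\<bar>y\<bar> / N)^2"
    proof -
      have "(sin \<theta>)^2 = 1 - (\<bar>x\<bar> / N)^2" using sin_cos_squared_add[of \<theta>] cth by simp
      also have "\<dots> = (N^2 - x^2) / N^2" using Npos by (simp add: field_simps power_divide)
      also have "\<dots> = (\<bar>y\<bar> / N)^2" using N2 by (simp add: power_divide)
      finally show ?thesis .
    qed
    ultimately show ?thesis by (metis abs_ge_zero divide_nonneg_pos Npos power2_eq_imp_eq)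
  qed
  have xne: "x \<noteq> 0"
  proof
    assume "x = 0"
    then have "cos \<theta> = 0" using cth by simp
    moreover have "cos \<theta> > 0" using pos lt by (intro cos_gt_zero_pi) auto
    ultimately show False by simp
  qed
  have yne: "y \<noteq> 0"
  proof
    assume "y = 0"
    then have "sin \<theta> = 0" using sth by simp
    moreover have "sin \<theta> > 0" using pos lt by (intro sin_gt_zero) auto
    ultimately show False by simp
  qed
  define \<sigma> :: real where "\<sigma> = (if x * y > 0 then -1 else 1)"
  have cis: "cnj w / w = cis (\<sigma> * (2 * \<theta>))"
  proof (rule complex_eqI)
    show "Re (cnj w / w) = Re (cis (\<sigma> * (2 * \<theta>)))"
      using ReL cth sth by (simp add: \<sigma>_def cos_double power_divide diff_divide_distrib)
    show "Im (cnj w / w) = Im (cis (\<sigma> * (2 * \<theta>)))"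
    proof -
      have s2t: "sin (2 * \<theta>) = 2 * \<bar>x\<bar> * \<bar>y\<bar> / N^2"
        using cth sth by (simp add: sin_double power2_eq_square)
      have "Im (cis (\<sigma> * (2 * \<theta>))) = \<sigma> * sin (2 * \<theta>)" by (simp add: \<sigma>_def)
      also have "\<dots> = - 2 * x * y / N^2" unfolding s2t \<sigma>_def
        using xne yne by (auto simp: abs_if zero_less_mult_iff)
      finally show ?thesis using ImL by simp
    qed
  qed
  have "cis (real k * (\<sigma> * (2 * \<theta>))) = 1" using eq lam cis by (metis Complex.DeMoivre)
  then have "cos (real k * (\<sigma> * (2 * \<theta>))) = 1" by (metis cis.sel(1) one_complex.sel(1))
  then obtain n :: int where n: "real k * (\<sigma> * (2 * \<theta>)) = n * 2 * pi" by (auto simp: cos_one_2pi_int)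
  have s2: "\<sigma> * \<sigma> = 1" by (simp add: \<sigma>_def)
  have "\<theta> = pi * (of_int n * \<sigma> / of_nat k)"
  proof -
    have "real k * 2 * \<theta> = \<sigma> * n * 2 * pi" using n by (auto simp: \<sigma>_def split: if_splits)
    then show ?thesis using k by (simp add: field_simps)
  qed
  moreover have "of_int n * \<sigma> / of_nat k \<in> \<rat>" by (simp add: \<sigma>_def)
  ultimately show False using irr by blast
qed



lemma refl_deriv:
  assumes "(f has_field_derivative f') (at (p + v * cnj (z - p)))"
  shows "((\<lambda>z. cnj (f (p + v * cnj (z - p)))) has_field_derivative cnj (f' * v)) (at z)"
proof -
  have d1: "((\<lambda>z. p + v * cnj (z - p)) has_derivative (\<lambda>h. v * cnj h)) (at z)"
    by (auto intro!: derivative_eq_intros)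
  have "((\<lambda>z. f (p + v * cnj (z - p))) has_derivative (\<lambda>h. f' * (v * cnj h))) (at z)"
    using has_derivative_compose[OF d1 assms[unfolded has_field_derivative_def]] by simp
  then have "((\<lambda>z. cnj (f (p + v * cnj (z - p)))) has_derivative (\<lambda>h. cnj (f' * (v * cnj h)))) (at z)"
    by (rule has_derivative_cnj)
  moreover have "(\<lambda>h. cnj (f' * (v * cnj h))) = (*) (cnj (f' * v))" by (auto simp: fun_eq_iff)
  ultimately show ?thesis by (simp add: has_field_derivative_def)
qed

lemma refl_dist: "cmod v = 1 \<Longrightarrow> dist (p + v * cnj (z - p)) p = dist z p"
  by (simp add: dist_norm norm_mult del: complex_cnj_diff)

lemma refl_holo:
  assumes "f holomorphic_on ball p r" "cmod v = 1"
  shows "(\<lambda>z. cnj (f (p + v * cnj (z - p)))) holomorphic_on ball p r"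
  unfolding holomorphic_on_def
proof
  fix z assume z: "z \<in> ball p r"
  then have "p + v * cnj (z - p) \<in> ball p r" using refl_dist[OF assms(2), of p z]
    by (simp add: dist_commute)
  then have "f field_differentiable at (p + v * cnj (z - p))"
    using assms(1) holomorphic_on_imp_differentiable_at by blast
  then obtain f' where "(f has_field_derivative f') (at (p + v * cnj (z - p)))"
    by (auto simp: field_differentiable_def)
  from refl_deriv[OF this] show "(\<lambda>z. cnj (f (p + v * cnj (z - p)))) field_differentiable at z within ball p r"
    by (meson field_differentiable_at_within field_differentiable_def)
qed

lemma seg_fix:
  assumes "a \<noteq> b" "z \<in> closed_segment a b" "p \<in> closed_segment a b"
  shows "p + (b - a) / cnj (b - a) * cnj (z - p) = z"
proof -
  obtain u where u: "z = (1 - u) *\<^sub>R a + u *\<^sub>R b" using assms(2) by (auto simp: in_segment)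
  obtain s where s: "p = (1 - s) *\<^sub>R a + s *\<^sub>R b" using assms(3) by (auto simp: in_segment)
  have "z - p = of_real (u - s) * (b - a)" by (simp add: u s scaleR_conv_of_real algebra_simps)
  note zp = this
  then have c: "cnj (z - p) = of_real (u - s) * cnj (b - a)"
    by (simp only: complex_cnj_mult complex_cnj_complex_of_real)
  have "cnj (b - a) \<noteq> 0" using assms(1) by simp
  then have "(b - a) / cnj (b - a) * (of_real (u - s) * cnj (b - a)) = of_real (u - s) * (b - a)"
    by (simp add: field_simps del: complex_cnj_diff)
  then have "p + (b - a) / cnj (b - a) * cnj (z - p) = p + of_real (u - s) * (b - a)"
    by (simp only: c)
  then show ?thesis using zp by (metis add.commute diff_add_cancel)
qed

lemma reflect_identity:
  fixes f g :: "complex \<Rightarrow> complex"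
  assumes hf: "f holomorphic_on ball p r" and hg: "g holomorphic_on ball p r" and r: "r > 0"
    and ab: "a \<noteq> b" and p: "p \<in> closed_segment a b"
    and eq: "\<forall>z \<in> closed_segment a b. cmod (f z) = cmod (g z)"
    and z: "z \<in> ball p r"
  shows "f z * cnj (f (p + (b - a) / cnj (b - a) * cnj (z - p)))
       = g z * cnj (g (p + (b - a) / cnj (b - a) * cnj (z - p)))"
proof -
  define v where "v = (b - a) / cnj (b - a)"
  have v1: "cmod v = 1" using ab by (simp add: v_def norm_divide del: complex_cnj_diff)
  define F where "F = (\<lambda>z. f z * cnj (f (p + v * cnj (z - p))) - g z * cnj (g (p + v * cnj (z - p))))"
  have hF: "F holomorphic_on ball p r"
    unfolding F_def using hf hg refl_holo[OF hf v1] refl_holo[OF hg v1]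
    by (intro holomorphic_intros) auto
  define U where "U = closed_segment a b \<inter> ball p r"
  have lim: "p islimpt U"
  proof -
    have ns: "\<And>x. closed_segment a b \<noteq> {x}" using ab ends_in_segment by (metis singletonD)
    have "p islimpt closed_segment a b"
      using connected_imp_perfect[OF connected_segment p ns] .
    then show ?thesis unfolding U_def islimpt_def
      by (metis IntI Int_iff centre_in_ball open_Int open_ball r)
  qed
  have "F w = 0" if "w \<in> U" for w
  proof -
    have w: "w \<in> closed_segment a b" using that by (simp add: U_def)
    have "p + v * cnj (w - p) = w" using seg_fix[OF ab w p] by (simp add: v_def)
    then have "F w = f w * cnj (f w) - g w * cnj (g w)" by (simp add: F_def)
    also have "\<dots> = of_real ((cmod (f w))^2) - of_real ((cmod (g w))^2)"
      by (simp only: complex_norm_square)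
    also have "\<dots> = 0" using eq w by simp
    finally show ?thesis .
  qed
  note F0 = this
  have Us: "U \<subseteq> ball p r" by (auto simp: U_def)
  have pin: "p \<in> ball p r" using r by simp
  have "F z = 0"
    using analytic_continuation[OF hF open_ball connected_ball Us pin lim F0 z] .
  then show ?thesis by (simp add: F_def v_def)
qed



theorem theorem2p1:
  fixes f g :: "complex \<Rightarrow> complex" and a1 b1 a2 b2 :: complex and \<theta> :: real
  assumes "f holomorphic_on ball 0 1" and "g holomorphic_on ball 0 1"
    and "a1 \<noteq> b1" and "a2 \<noteq> b2"
    and "closed_segment a1 b1 \<subseteq> ball 0 1" and "closed_segment a2 b2 \<subseteq> ball 0 1"
    and "closed_segment a1 b1 \<inter> closed_segment a2 b2 \<noteq> {}"
    and "\<theta> = line_angle (b1 - a1) (b2 - a2)"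
    and "0 < \<theta>" and "\<theta> < pi / 2"
    and "\<not> (\<exists>q \<in> \<rat>. \<theta> = pi * q)"
    and "\<forall>z \<in> closed_segment a1 b1 \<union> closed_segment a2 b2. cmod (f z) = cmod (g z)"
  shows "\<exists>\<beta>. cmod \<beta> = 1 \<and> (\<forall>z \<in> ball 0 1. f z = \<beta> * g z)"
proof -
  obtain p where p1: "p \<in> closed_segment a1 b1" and p2: "p \<in> closed_segment a2 b2"
    using assms(7) by blast
  have pD: "p \<in> ball 0 1" using p1 assms(5) by blast
  obtain r0 where r0: "r0 > 0" "ball p r0 \<subseteq> ball 0 1"
    using open_contains_ball pD open_ball by blast
  define v1 where "v1 = (b1 - a1) / cnj (b1 - a1)"
  define v2 where "v2 = (b2 - a2) / cnj (b2 - a2)"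
  define R1 where "R1 = (\<lambda>z. p + v1 * cnj (z - p))"
  define R2 where "R2 = (\<lambda>z. p + v2 * cnj (z - p))"
  have v1n: "cmod v1 = 1" using assms(3) by (simp add: v1_def norm_divide del: complex_cnj_diff)
  have v2n: "cmod v2 = 1" using assms(4) by (simp add: v2_def norm_divide del: complex_cnj_diff)
  have hf0: "f holomorphic_on ball p r0" using assms(1) r0(2) by (rule holomorphic_on_subset)
  have hg0: "g holomorphic_on ball p r0" using assms(2) r0(2) by (rule holomorphic_on_subset)
  have A: "f z * cnj (f (R1 z)) = g z * cnj (g (R1 z))" if "z \<in> ball p r0" for z
    using reflect_identity[OF hf0 hg0 r0(1) assms(3) p1 _ that] assms(12)
    unfolding R1_def v1_def by blast
  have B: "f z * cnj (f (R2 z)) = g z * cnj (g (R2 z))" if "z \<in> ball p r0" for z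
    using reflect_identity[OF hf0 hg0 r0(1) assms(4) p2 _ that] assms(12)
    unfolding R2_def v2_def by blast
  have vv1: "v1 * cnj v1 = 1" using complex_norm_square[of v1] v1n by simp
  have RR: "R1 (R1 z) = z" for z
  proof -
    have "R1 (R1 z) = p + (v1 * cnj v1) * (z - p)" by (simp add: R1_def algebra_simps)
    then show ?thesis using vv1 by simp
  qed
  have Rd1: "dist (R1 z) p = dist z p" for z using refl_dist[OF v1n] by (simp add: R1_def)
  have Rd2: "dist (R2 z) p = dist z p" for z using refl_dist[OF v2n] by (simp add: R2_def)
  define lam where "lam = v2 * cnj v1"
  have Q: "R2 (R1 w) = p + lam * (w - p)" for w by (simp add: R1_def R2_def lam_def algebra_simps)
  have ln: "cmod lam = 1" using v1n v2n by (simp add: lam_def norm_mult)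
  have lampow: "lam ^ k \<noteq> 1" if "k > 0" for k
    using angle_part[OF _ _ assms(8) assms(9) assms(10) assms(11) that] assms(3,4)
    unfolding lam_def v1_def v2_def by simp
  show ?thesis
  proof (cases "\<forall>z\<in>ball 0 1. g z = 0")
    case True
    have f0: "f z = 0" if "z \<in> closed_segment a1 b1" for z
    proof -
      have "g z = 0" using True assms(5) that by blast
      moreover have "cmod (f z) = cmod (g z)" using assms(12) that by blast
      ultimately show ?thesis by simp
    qed
    have ns: "\<And>x. closed_segment a1 b1 \<noteq> {x}" using assms(3) ends_in_segment by (metis singletonD)
    have lim: "a1 islimpt closed_segment a1 b1"
      using connected_imp_perfect[OF connected_segment ends_in_segment(1) ns] .
    have a1D: "a1 \<in> ball 0 1" using assms(5) ends_in_segment(1) by blast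
    have "f z = 0" if "z \<in> ball 0 1" for z
      using analytic_continuation[OF assms(1) open_ball connected_ball assms(5) a1D lim f0 that] .
    then show ?thesis using True by (intro exI[of _ 1]) auto
  next
    case False
    then obtain q where q: "q \<in> ball 0 1" "g q \<noteq> 0" by blast
    obtain r where r: "r > 0" "ball p r \<subseteq> ball p r0" "\<And>z. z \<in> ball p r - {p} \<Longrightarrow> g z \<noteq> 0"
    proof (cases "g p = 0")
      case True
      obtain r1 where "0 < r1" "ball p r1 \<subseteq> ball 0 1" "\<And>z. z \<in> ball p r1 - {p} \<Longrightarrow> g z \<noteq> 0"
        using isolated_zeros[OF assms(2) open_ball connected_ball pD True q(1) q(2)] by blast
      then show ?thesis using r0 by (intro that[of "min r0 r1"]) auto
    next
      case False
      have "continuous (at p) g"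
        using assms(2) pD holomorphic_on_imp_continuous_on continuous_on_eq_continuous_at open_ball
        by blast
      then obtain e where "e > 0" "\<And>y. dist p y < e \<Longrightarrow> g y \<noteq> 0"
        using continuous_at_avoid[of p g 0] False by blast
      then show ?thesis using r0 by (intro that[of "min r0 e"]) auto
    qed
    have Bp: "z \<in> ball p r - {p} \<longleftrightarrow> 0 < dist z p \<and> dist z p < r" for z
      by (auto simp: dist_commute)
    have R1in: "R1 z \<in> ball p r - {p}" if "z \<in> ball p r - {p}" for z
      using that Rd1[of z] unfolding Bp by simp
    have R2in: "R2 z \<in> ball p r - {p}" if "z \<in> ball p r - {p}" for z
      using that Rd2[of z] unfolding Bp by simp
    define h where "h = (\<lambda>z. f z / g z)"
    have hQ: "h (p + lam * (w - p)) = h w" if w: "w \<in> ball p r - {p}" for w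
    proof -
      define z where "z = R1 w"
      have z: "z \<in> ball p r - {p}" using R1in[OF w] by (simp add: z_def)
      have Rz: "R1 z = w" by (simp add: z_def RR)
      have z0: "z \<in> ball p r0" using z r(2) by blast
      have gz: "g z \<noteq> 0" using r(3) z by blast
      have gw: "g w \<noteq> 0" using r(3) w by blast
      have g2: "g (R2 z) \<noteq> 0" using r(3) R2in[OF z] by blast
      have eA: "f z * cnj (f w) = g z * cnj (g w)" using A[OF z0] Rz by simp
      have eB: "f z * cnj (f (R2 z)) = g z * cnj (g (R2 z))" using B[OF z0] .
      have fz: "f z \<noteq> 0" using eA gz gw by auto
      have c1: "cnj (h w) = g z / f z" using eA fz gw by (simp add: h_def field_simps)
      have c2: "cnj (h (R2 z)) = g z / f z" using eB fz g2 by (simp add: h_def field_simps)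
      have "h (R2 z) = h w" using c1 c2 by (metis complex_cnj_cnj)
      moreover have "R2 z = p + lam * (w - p)" using Q[of w] by (simp add: z_def)
      ultimately show ?thesis by simp
    qed
    define w0 where "w0 = p + of_real (r / 2)"
    define orb where "orb = (\<lambda>k::nat. p + lam ^ k * (w0 - p))"
    have orbn: "dist (orb k) p = r / 2" for k
      using r(1) by (simp add: orb_def w0_def dist_norm norm_mult norm_power ln)
    have orbin: "orb k \<in> ball p r - {p}" for k
    proof -
      have ne: "orb k \<noteq> p"
      proof
        assume "orb k = p"
        then have "dist (orb k) p = 0" by simp
        with orbn[of k] r(1) show False by simp
      qed
      have "dist p (orb k) < r" using orbn[of k] r(1) by (simp add: dist_commute)
      then show ?thesis using ne by simp
    qed
    have orbh: "h (orb k) = h w0" for k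
    proof (induction k)
      case 0 then show ?case by (simp add: orb_def)
    next
      case (Suc k)
      have "orb (Suc k) = p + lam * (orb k - p)" by (simp add: orb_def)
      then show ?case using hQ[OF orbin[of k]] Suc by simp
    qed
    have l0: "lam \<noteq> 0" using ln by auto
    have w0p: "w0 - p \<noteq> 0" using r(1) by (simp add: w0_def)
    have "inj orb"
    proof (rule injI)
      fix j k assume "orb j = orb k"
      then have jk: "lam ^ j = lam ^ k" using w0p by (simp add: orb_def)
      show "j = k"
      proof (rule ccontr)
        assume "j \<noteq> k"
        then consider "j < k" | "k < j" by linarith
        then show False
        proof cases
          case 1
          have "lam ^ k = lam ^ j * lam ^ (k - j)" using 1 by (simp add: power_add[symmetric])
          then have "lam ^ (k - j) = 1" using jk l0 by simp
          then show False using lampow[of "k - j"] 1 by simp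
        next
          case 2
          have "lam ^ j = lam ^ k * lam ^ (j - k)" using 2 by (simp add: power_add[symmetric])
          then have "lam ^ (j - k) = 1" using jk l0 by simp
          then show False using lampow[of "j - k"] 2 by simp
        qed
      qed
    qed
    then have inf: "infinite (range orb)" by (rule range_inj_infinite)
    have sub: "range orb \<subseteq> sphere p (r / 2)" using orbn by (auto simp: dist_commute)
    obtain \<xi> where \<xi>: "\<xi> \<in> sphere p (r / 2)" "\<xi> islimpt range orb"
      using Heine_Borel_imp_Bolzano_Weierstrass[OF compact_sphere inf sub] by blast
    have "sphere p (r / 2) \<subseteq> ball p r" using r(1) by (auto simp: subset_iff)
    then have sphD: "sphere p (r / 2) \<subseteq> ball 0 1" using r(2) r0(2) by blast
    have orbD: "range orb \<subseteq> ball 0 1" using sub sphD by blast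
    define c0 where "c0 = h w0"
    have H0: "f z - c0 * g z = 0" if zr: "z \<in> range orb" for z
    proof -
      obtain k where k: "z = orb k" using zr by blast
      have "g z \<noteq> 0" using r(3) orbin k by blast
      moreover have "h z = c0" using orbh k by (simp add: c0_def)
      ultimately show ?thesis by (simp add: h_def field_simps)
    qed
    have hH: "(\<lambda>z. f z - c0 * g z) holomorphic_on ball 0 1"
      using assms(1,2) by (intro holomorphic_intros)
    have feq: "f z = c0 * g z" if "z \<in> ball 0 1" for z
      using analytic_continuation[OF hH open_ball connected_ball orbD _ \<xi>(2) H0 that] \<xi>(1) sphD
      by auto
    have w0in: "w0 \<in> ball p r - {p}" using orbin[of 0] by (simp add: orb_def)
    have R1w0: "R1 w0 \<in> ball p r - {p}" using R1in[OF w0in] .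
    have w0D: "w0 \<in> ball 0 1" and R1D: "R1 w0 \<in> ball 0 1" using w0in R1w0 r(2) r0(2) by blast+
    have "f w0 * cnj (f (R1 w0)) = g w0 * cnj (g (R1 w0))" using A w0in r(2) by blast
    then have "(c0 * cnj c0) * (g w0 * cnj (g (R1 w0))) = 1 * (g w0 * cnj (g (R1 w0)))"
      using feq[OF w0D] feq[OF R1D] by (simp add: algebra_simps)
    moreover have "g w0 * cnj (g (R1 w0)) \<noteq> 0" using r(3) w0in R1w0 by simp
    ultimately have "c0 * cnj c0 = 1" by (metis mult_right_cancel)
    then have "complex_of_real ((cmod c0)^2) = 1" using complex_norm_square[of c0] by simp
    then have "(cmod c0)^2 = 1" using of_real_eq_1_iff by blast
    then have "cmod c0 = 1" using norm_ge_zero[of c0] by (simp add: power2_eq_1_iff)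
    then show ?thesis using feq by blast
  qed
qed

end
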